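(* Let $\nu\ge3$ be a square-free integer with $\nu\equiv2$ or $3\pmod 4$, and for $n\ge0$ let $P_n(t)=(t^2-\nu)^{\circ n}\in\mathbb{Z}[t]$ (so $P_0(t)=t$). For $n\ge1$ write $P_n(t)=R_n(t)t^4+D_nt^2+C_n$ with $R_n\in\mathbb{Z}[t]$ and $D_n,C_n\in\mathbb{Z}$. Let $p$ be an odd prime not dividing $\nu$ such that $p$ divides $C_n$ for some $n\ge1$, and let $n(p)$ be the least positive integer $n$ with $p\mid C_n$. Then for every $n\ge0$, the polynomial $\bar P_n^2\,\bar R_{n(p)}(\bar P_n)+\bar D_{n(p)}\in\mathbb{F}_p[t]$ is separable (has no repeated irreducible factor).
   Context: Bars denote reduction modulo $p$. *)

theory Defs
  imports "Berlekamp_Zassenhaus.Finite_Field"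
    "HOL-Computational_Algebra.Squarefree"
    "HOL-Computational_Algebra.Polynomial"
begin

fun Ppoly :: "int \<Rightarrow> nat \<Rightarrow> int poly" where
  "Ppoly nu 0 = [:0, 1:]"
| "Ppoly nu (Suc n) = pcompose [:- nu, 0, 1:] (Ppoly nu n)"

text \<open>For n >= 1, P_n(t) = R_n(t) t^4 + D_n t^2 + C_n (P_n is even, so its
  coefficients of t and t^3 vanish and this decomposition is unique).\<close>
definition Rpoly :: "int \<Rightarrow> nat \<Rightarrow> int poly" where
  "Rpoly nu n = poly_shift 4 (Ppoly nu n)"

definition Dcoef :: "int \<Rightarrow> nat \<Rightarrow> int" where
  "Dcoef nu n = coeff (Ppoly nu n) 2"

definition Ccoef :: "int \<Rightarrow> nat \<Rightarrow> int" where
  "Ccoef nu n = coeff (Ppoly nu n) 0"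

definition np :: "int \<Rightarrow> int \<Rightarrow> nat" where
  "np nu p = (LEAST n. n \<ge> 1 \<and> p dvd Ccoef nu n)"

text \<open>Reduction modulo p, where p = CARD('p).\<close>
definition redp :: "int poly \<Rightarrow> 'p::prime_card mod_ring poly" where
  "redp f = map_poly of_int f"

end

theory Submission imports Defs begin

lemma P_add: "Ppoly nu (a+b) = pcompose (Ppoly nu a) (Ppoly nu b)"
  by (induction a) (simp_all add: pcompose_assoc pcompose_pCons)

definition Qp :: "int \<Rightarrow> nat \<Rightarrow> 'p::prime_card mod_ring poly" where
  "Qp nu k = redp (Ppoly nu k)"

lemma Q_add: "Qp nu (a+b) = pcompose (Qp nu a) (Qp nu b)"
  unfolding Qp_def redp_def P_add by (rule of_int_hom.map_poly_pcompose)

lemma Q_0: "Qp nu 0 = [:0,1:]"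
  by (simp add: Qp_def redp_def)

lemma Q_Suc: "Qp nu (Suc k) = (Qp nu k * Qp nu k - [:of_int nu:] :: 'p::prime_card mod_ring poly)"
proof -
  have "Qp nu (Suc k) = pcompose (map_poly of_int [:-nu,0,1:]) (Qp nu k)"
    unfolding Qp_def redp_def Ppoly.simps by (rule of_int_hom.map_poly_pcompose)
  also have "\<dots> = [:- of_int nu:] + Qp nu k * Qp nu k" by (simp add: pcompose_pCons)
  also have "[:- of_int nu:] = - [:(of_int nu :: 'p mod_ring):]" by simp
  finally show ?thesis by simp
qed

lemma dvd_pcompose_const: "g dvd pcompose F g - [:poly F 0:]"
  by (cases F rule: pCons_cases) (simp add: pcompose_pCons)

lemma sq_dvd_pderiv: fixes q :: "'a::field poly" shows "q^2 dvd f \<Longrightarrow> q dvd pderiv f"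
proof -
  assume "q^2 dvd f"
  then obtain g where "f = q^2*g" by (rule dvdE)
  then have g: "f = q*q*g" by (simp add: power2_eq_square)
  have "pderiv f = q * (q * pderiv g + g * pderiv q + g * pderiv q)"
    unfolding g by (simp add: pderiv_mult algebra_simps)
  then show ?thesis by simp
qed

lemma deriv_dvd:
  fixes q :: "'p::prime_card mod_ring poly"
  assumes two: "(2::'p mod_ring) \<noteq> 0" and q: "prime q"
  shows "q dvd pderiv (Qp nu k) \<Longrightarrow> \<exists>j<k. q dvd Qp nu j"
proof (induction k)
  case 0
  have "pderiv (Qp nu 0) = (1 :: 'p mod_ring poly)" by (simp add: Q_0 pderiv_pCons)
  with 0 have "q dvd 1" by metis
  with q show ?case using not_prime_unit by blast
next
  case (Suc k)
  have e1: "pderiv (Qp nu (Suc k)) = Qp nu k * pderiv (Qp nu k) + Qp nu k * pderiv (Qp nu k)"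
    by (simp add: Q_Suc pderiv_mult pderiv_diff pderiv_pCons)
  have e: "pderiv (Qp nu (Suc k)) = 2 * (Qp nu k * pderiv (Qp nu k))"
    unfolding e1 by (rule mult_2[symmetric])
  have u: "is_unit (2::'p mod_ring poly)"
    using two is_unit_triv[of "2::'p mod_ring"] by (metis of_nat_numeral of_nat_poly)
  have "\<not> q dvd 2" using q u
    by (meson dvd_unit_imp_unit not_prime_unit)
  then have "q dvd Qp nu k \<or> q dvd pderiv (Qp nu k)"
    using Suc.prems e q by (metis prime_dvd_mult_iff)
  then show ?case using Suc.IH less_Suc_eq by blast
qed


lemma sq_coeffs:
  fixes X :: "'a::comm_ring_1 poly"
  shows "coeff (X*X - [:a:]) 1 = 2 * coeff X 0 * coeff X 1"
    and "coeff (X*X - [:a:]) 2 = 2 * coeff X 0 * coeff X 2 + coeff X 1 ^ 2"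
    and "coeff (X*X - [:a:]) 3 = 2 * coeff X 0 * coeff X 3 + 2 * coeff X 1 * coeff X 2"
  by (simp_all add: coeff_mult numeral_eq_Suc atMost_Suc algebra_simps power2_eq_square)

lemma odd_coeffs: "coeff (Qp nu (Suc k) :: 'p::prime_card mod_ring poly) 1 = 0 \<and> coeff (Qp nu (Suc k) :: 'p mod_ring poly) 3 = 0"
proof (induction k)
  case 0
  show ?case unfolding Q_Suc[of nu 0] Q_0 sq_coeffs by (simp add: numeral_eq_Suc)
next
  case (Suc k)
  then show ?case unfolding Q_Suc[of nu "Suc k"] sq_coeffs by simp
qed

lemma D_rec: "coeff (Qp nu (Suc (Suc k)) :: 'p::prime_card mod_ring poly) 2 = 2 * poly (Qp nu (Suc k)) 0 * coeff (Qp nu (Suc k)) 2"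
proof -
  have "coeff (Qp nu (Suc k) :: 'p::prime_card mod_ring poly) 1 = 0" using odd_coeffs by blast
  then show ?thesis unfolding Q_Suc[of nu "Suc k"] sq_coeffs by (simp add: poly_0_coeff_0)
qed

lemma D1: "coeff (Qp nu 1 :: 'p::prime_card mod_ring poly) 2 = 1"
  unfolding One_nat_def Q_Suc Q_0 sq_coeffs by simp

lemma degQ: "degree (Qp nu k :: 'p::prime_card mod_ring poly) = 2^k"
proof (induction k)
  case 0
  then show ?case by (simp add: Q_0)
next
  case (Suc k)
  have nz: "(Qp nu k :: 'p mod_ring poly) \<noteq> 0"
  proof
    assume "(Qp nu k :: 'p mod_ring poly) = 0"
    then have "(2::nat)^k = 0" using Suc.IH by simp
    then show False by simp
  qed
  have "degree (Qp nu k * Qp nu k :: 'p mod_ring poly) = 2^Suc k" using Suc nz by (simp add: degree_mult_eq)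
  moreover have "degree [:of_int nu:] < degree (Qp nu k * Qp nu k :: 'p mod_ring poly)" using Suc nz by (simp add: degree_mult_eq)
  ultimately show ?case unfolding Q_Suc by (simp add: degree_diff_less degree_add_eq_left diff_conv_add_uminus)
qed


lemma a1: "pcompose (monom 1 4) g = (g::'a::comm_ring_1 poly)^4"
proof -
  have "pcompose [:0,1:] g = g" by (simp add: pcompose_pCons)
  then show ?thesis by (simp add: monom_altdef pcompose_smult pcompose_hom.hom_power)
qed
lemma a2: "pcompose [:0,0,D:] g = g * (g * [:D:])"
  by (simp add: pcompose_pCons)
lemma a3: fixes g :: "'a::comm_ring_1 poly" shows
  "pcompose (monom 1 4 * Rb + [:0,0,D:]) g = g^2 * (g^2 * pcompose Rb g + [:D:])"
  by (simp add: pcompose_add pcompose_mult a1 a2 algebra_simps power2_eq_square power4_eq_xxxx)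
lemma a4: fixes Rb :: "'a::comm_ring_1 poly" 
  assumes "i < 4" "coeff Q 0 = 0" "coeff Q 1 = 0" "coeff Q 3 = 0"
  shows "coeff Q i = coeff (monom 1 4 * Rb + [:0,0,coeff Q 2:]) i"
proof -
  have "coeff (monom 1 4 * Rb) i = 0" using assms(1) by (simp add: coeff_monom_mult)
  moreover have "i = 0 \<or> i = 1 \<or> i = 2 \<or> i = 3" using assms(1) by auto
  ultimately show ?thesis using assms by (auto simp: numeral_2_eq_2 numeral_3_eq_3)
qed
lemma a5: fixes Rb :: "'a::comm_ring_1 poly" 
  assumes "\<And>j. coeff Rb j = coeff Q (j+4)"
  shows "coeff Q (j+4) = coeff (monom 1 4 * Rb + [:0,0,D:]) (j+4)"
  using assms by (simp add: coeff_monom_mult numeral_eq_Suc)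

theorem lemma4p7:
  fixes nu :: int and p :: int
  assumes "nu \<ge> 3" and "squarefree nu"
    and "nu mod 4 = 2 \<or> nu mod 4 = 3"
    and "p = int CARD('p::prime_card)" and "odd p" and "\<not> p dvd nu"
    and "\<exists>n\<ge>1. p dvd Ccoef nu n"
  shows "\<forall>n. squarefree
     ((redp (Ppoly nu n) :: 'p mod_ring poly)\<^sup>2
       * pcompose (redp (Rpoly nu (np nu p))) (redp (Ppoly nu n))
       + [:of_int (Dcoef nu (np nu p)):])"
proof
  fix n
  define m where "m = np nu p"
  define Q where "Q k = (Qp nu k :: 'p mod_ring poly)" for k
  define c where "c k = poly (Q k) 0" for k
  have QA: "Q (a + b) = pcompose (Q a) (Q b)" for a b unfolding Q_def by (rule Q_add)
  have cC: "c k = of_int (Ccoef nu k)" for k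
    by (simp add: c_def Q_def Qp_def redp_def Ccoef_def poly_0_coeff_0 coeff_map_poly)
  have c0iff: "c k = 0 \<longleftrightarrow> p dvd Ccoef nu k" for k
    unfolding cC of_int_eq_0_iff_char_dvd semiring_char_mod_ring assms(4) ..
  have ex: "\<exists>n. n \<ge> 1 \<and> p dvd Ccoef nu n" using assms(7) by blast
  have mLI: "m \<ge> 1 \<and> p dvd Ccoef nu m"
    unfolding m_def np_def by (rule LeastI_ex[OF ex])
  then have m1: "m \<ge> 1" and cm: "c m = 0" using c0iff by auto
  have cmin: "c j \<noteq> 0" if "1 \<le> j" "j < m" for j
  proof
    assume "c j = 0"
    then have "j \<ge> 1 \<and> p dvd Ccoef nu j" using that c0iff by auto
    then have "m \<le> j" unfolding m_def np_def by (rule Least_le)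
    then show False using that by simp
  qed
  have c_per: "c (a + k*m) = c a" for a k
  proof (induction k)
    case 0 then show ?case by simp
  next
    case (Suc k)
    have "c (a + Suc k * m) = poly (pcompose (Q (a + k*m)) (Q m)) 0"
      unfolding c_def QA[symmetric] by (simp add: algebra_simps)
    also have "\<dots> = c (a + k*m)" using cm by (simp add: c_def poly_pcompose)
    finally show ?case using Suc by simp
  qed
  have c00: "c 0 = 0" by (simp add: c_def Q_def Q_0)
  have c_mul: "c (k*m) = 0" for k using c_per[of 0 k] c00 by simp
  have c_zero: "m dvd i" if "c i = 0" for i
  proof (rule ccontr)
    assume nd: "\<not> m dvd i"
    have "c (i mod m) = c i" using c_per[of "i mod m" "i div m"] by simp
    moreover have "1 \<le> i mod m" "i mod m < m" using nd m1 by (auto simp: mod_eq_0_iff_dvd[symmetric])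
    ultimately show False using cmin that by metis
  qed
  have "prime (CARD('p))" by (rule prime_card)
  then have "CARD('p) \<ge> 2" by (rule prime_ge_2_nat)
  then have p2: "p \<ge> 2" using assms(4) by simp
  have two: "(2::'p mod_ring) \<noteq> 0"
  proof
    assume "(2::'p mod_ring) = 0"
    then have "(of_int 2::'p mod_ring) = 0" by simp
    then have "p dvd 2" unfolding of_int_eq_0_iff_char_dvd semiring_char_mod_ring assms(4) .
    then have "p \<le> 2" by (simp add: zdvd_imp_le)
    then show False using p2 assms(5) by simp
  qed
  have Dnz': "Suc k \<le> m \<longrightarrow> coeff (Q (Suc k)) 2 \<noteq> 0" for k
  proof (induction k)
    case 0
    have "coeff (Qp nu 1 :: 'p mod_ring poly) 2 = 1" by (rule D1)
    then show ?case by (simp add: Q_def)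
  next
    case (Suc k)
    show ?case
    proof
      assume a: "Suc (Suc k) \<le> m"
      have "c (Suc k) \<noteq> 0" using cmin a by simp
      then show "coeff (Q (Suc (Suc k))) 2 \<noteq> 0"
        using Suc a two unfolding Q_def c_def D_rec by simp
    qed
  qed
  define D where "D = coeff (Q m) 2"
  have Dnz: "D \<noteq> 0" using Dnz'[of "m - 1"] m1 by (simp add: D_def)
  have Dco: "(of_int (Dcoef nu m) :: 'p mod_ring) = D"
    by (simp add: D_def Q_def Qp_def redp_def Dcoef_def coeff_map_poly)
  define Rb where "Rb = (redp (Rpoly nu m) :: 'p mod_ring poly)"
  have Rbc: "coeff Rb j = coeff (Q m) (j + 4)" for j
    by (simp add: Rb_def Q_def Qp_def redp_def Rpoly_def coeff_map_poly coeff_poly_shift)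
  obtain m' where m': "m = Suc m'" using m1 by (cases m) auto
  have odd13: "coeff (Q m) 1 = 0" "coeff (Q m) 3 = 0" using odd_coeffs unfolding Q_def m' by auto
  have cm0: "coeff (Q m) 0 = 0" using cm by (simp add: c_def poly_0_coeff_0)
  have decomp: "Q m = monom 1 4 * Rb + [:0,0,D:]"
  proof (rule poly_eqI)
    fix i
    show "coeff (Q m) i = coeff (monom 1 4 * Rb + [:0,0,D:]) i"
    proof (cases "i < 4")
      case True
      then show ?thesis unfolding D_def using a4 odd13 cm0 by blast
    next
      case False
      then obtain j where j: "i = j + 4" using le_Suc_ex[of 4 i] by (auto simp: add.commute)
      then show ?thesis using a5[OF Rbc] by simp
    qed
  qed
  define T where "T = (Q n)\<^sup>2 * pcompose Rb (Q n) + [:D:]"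
  have pcX: "pcompose [:0,1:] g = g" for g :: "'p mod_ring poly" by (simp add: pcompose_pCons)
  have Qmn: "Q (m + n) = (Q n)\<^sup>2 * T"
  proof -
    have "Q (m + n) = pcompose (monom 1 4 * Rb + [:0,0,D:]) (Q n)" using QA decomp by simp
    then show ?thesis unfolding T_def a3 .
  qed
  have Qnz: "Q k \<noteq> 0" for k
  proof
    assume "Q k = 0"
    moreover have "degree (Qp nu k :: 'p mod_ring poly) = 2^k" by (rule degQ)
    ultimately have "(2::nat)^k = 0" by (simp add: Q_def)
    then show False by simp
  qed
  have Tnz: "T \<noteq> 0" using Qmn Qnz by auto
  have goal: "squarefree T"
    unfolding squarefree_factorial_semiring[OF Tnz]
  proof (intro allI impI notI)
    fix q :: "'p mod_ring poly"
    assume q: "prime q" and qT: "q\<^sup>2 dvd T"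
    have nu: "\<not> q dvd [:a:]" if "a \<noteq> 0" for a
      using q that is_unit_triv dvd_unit_imp_unit not_prime_unit by blast
    have qqT: "q dvd T" using qT by (meson dvd_power dvd_trans zero_less_numeral)
    have "q\<^sup>2 dvd Q (m + n)" using qT Qmn by simp
    then have "q dvd pderiv (Qp nu (m+n))" using sq_dvd_pderiv Q_def by metis
    then obtain j where j: "j < m + n" "q dvd Q j" using deriv_dvd[OF two q] Q_def by metis
    define i where "i = m + n - j"
    have i1: "i \<ge> 1" using j by (simp add: i_def)
    have qQmn: "q dvd Q (m + n)" using qT Qmn qqT by simp
    have "Q (m + n) = pcompose (Q i) (Q j)" using QA[of i j] j by (simp add: i_def)
    moreover have "q dvd pcompose (Q i) (Q j) - [:c i:]"
      using dvd_trans[OF j(2) dvd_pcompose_const[of "Q j" "Q i"]] unfolding c_def .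
    ultimately have "q dvd Q (m + n) - [:c i:]" by simp
    from dvd_diff[OF qQmn this] have "q dvd [:c i:]" by simp
    then have "c i = 0" using nu by blast
    then obtain k where k: "i = k * m" using c_zero by (metis dvd_def mult.commute)
    have k1: "k \<ge> 1" using k i1 by (cases k) auto
    have km: "m \<le> k*m" using k1 by simp
    have km2: "(k-1)*m = k*m - m" by (simp add: diff_mult_distrib)
    have jn: "n - j = (k - 1) * m" "j \<le> n" using k km km2 j(1) unfolding i_def by linarith+
    have "n - j + j = n" using jn(2) by simp
    then have "Q n = pcompose (Q (n - j)) (Q j)" using QA[of "n - j" j] by simp
    moreover have "q dvd pcompose (Q (n - j)) (Q j) - [:c (n - j):]"
      using dvd_trans[OF j(2) dvd_pcompose_const[of "Q j" "Q (n - j)"]] unfolding c_def .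
    ultimately have "q dvd Q n - [:c (n - j):]" by simp
    then have qn: "q dvd Q n" using c_mul jn by simp
    have "q dvd T - [:D:]" unfolding T_def using qn by (simp add: power2_eq_square)
    from dvd_diff[OF qqT this] have "q dvd [:D:]" by simp
    then show False using nu Dnz by blast
  qed
  show "squarefree
     ((redp (Ppoly nu n) :: 'p mod_ring poly)\<^sup>2
       * pcompose (redp (Rpoly nu (np nu p))) (redp (Ppoly nu n))
       + [:of_int (Dcoef nu (np nu p)):])"
    using goal unfolding T_def Rb_def Q_def Qp_def m_def[symmetric] Dco .
qed

end
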